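(* Let $\mathcal{G}=(V,\sigma,E)$ be a signed, colored graph of type $(n,N)$ satisfying axiom (ax1), and let $\phi$ be a morphism from $\mathcal{G}$ to an augmented standard dual equivalence graph $\mathcal{G}_{\lambda,A}$ of type $(n,N)$. If $V\neq\emptyset$, then $\phi$ is surjective.
   Context: Conventions: partitions and French diagrams (cells $(i,j)$ with $1\le i\le\lambda_j$, rows numbered from the bottom); skew diagram $\rho/\lambda$ for $\lambda\subseteq\rho$ is the set difference; standard Young tableaux $\mathrm{SYT}(\rho)$ are bijections to $[N]$ increasing along rows and up columns; content of $(i,j)$ is $i-j$; the content reading word reads entries in increasing content, each diagonal southwest to northeast; the descent signature $\sigma(T)\in\{\pm1\}^{N-1}$ has $\sigma(T)_i=+1$ iff $i$ is to the left of $i+1$ in the reading word. For $1<i<N$, $d_i$ on words: if $i$ lies positionally between $i-1$ and $i+1$ it is the identity; otherwise it swaps $i$ with whichever of $i\pm1$ is farther from $i$; on tableaux it swaps the corresponding entries. A signed, colored graph of type $(n,N)$ is $(V,\sigma,E)$: a finite set $V$, $\sigma:V\to\{\pm1\}^{N-1}$, and for each $1<i<n$ a set $E_i$ of $2$-element subsets of $V$. Axiom (ax1): for all $w\in V$ and $1<i<n$, $\sigma(w)_{i-1}=-\sigma(w)_i$ iff there is $x$ with $\{w,x\}\in E_i$, and such $x$ is unique. A morphism from $(V,\sigma,E)$ to $(W,\tau,F)$ (both of type $(n,N)$ satisfying (ax1)) is a map $\phi:V\to W$ with $\tau(\phi(v))_i=\sigma(v)_i$ for all $1\le i<N$ and $\{\phi(u),\phi(v)\}\in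 F_i$ whenever $\{u,v\}\in E_i$, $1<i<n$. Augmented graph: for partitions $\lambda\subseteq\rho$ with $|\lambda|=n$, $|\rho|=N$, and a filling $A$ of $\rho/\lambda$ with entries $n+1,\dots,N$, let $\mathrm{ASYT}(\lambda,A)$ be the set of $T\in\mathrm{SYT}(\rho)$ whose restriction to $\rho/\lambda$ equals $A$ (assumed nonempty). $\mathcal{G}_{\lambda,A}$ is the signed colored graph of type $(n,N)$ with vertex set $\mathrm{ASYT}(\lambda,A)$, signature the descent signature in $\{\pm1\}^{N-1}$, and $E_i=\{\{T,d_i(T)\}:d_i(T)\ne T\}$ for $1<i<n$. *)

theory Defs
  imports Main "HOL-Library.Product_Lexorder"
begin

text \<open>A partition is a weakly decreasing list of positive naturals (its row lengths,
bottom row first). A cell (i,j) has column i and row j (rows numbered from the bottom),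
with 1 \<le> i \<le> lambda_j.\<close>

definition is_partition :: "nat list \<Rightarrow> bool" where
  "is_partition la \<longleftrightarrow> sorted_wrt (\<ge>) la \<and> 0 \<notin> set la"

definition psize :: "nat list \<Rightarrow> nat" where
  "psize la = sum_list la"

definition diagram :: "nat list \<Rightarrow> (nat \<times> nat) set" where
  "diagram la = {(i, j). 1 \<le> j \<and> j \<le> length la \<and> 1 \<le> i \<and> i \<le> la ! (j - 1)}"

definition skew :: "nat list \<Rightarrow> nat list \<Rightarrow> (nat \<times> nat) set" where
  "skew rho la = diagram rho - diagram la"

text \<open>A tableau is a function on cells, taken to be 0 outside its diagram.\<close>

definition SYT :: "nat list \<Rightarrow> (nat \<times> nat \<Rightarrow> nat) set" where
  "SYT rho = {T. bij_betw T (diagram rho) {1..psize rho}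
              \<and> (\<forall>c. c \<notin> diagram rho \<longrightarrow> T c = 0)
              \<and> (\<forall>i j. (i, j) \<in> diagram rho \<and> (i + 1, j) \<in> diagram rho \<longrightarrow> T (i, j) < T (i + 1, j))
              \<and> (\<forall>i j. (i, j) \<in> diagram rho \<and> (i, j + 1) \<in> diagram rho \<longrightarrow> T (i, j) < T (i, j + 1))}"

definition content :: "nat \<times> nat \<Rightarrow> int" where
  "content c = int (fst c) - int (snd c)"

definition rkey :: "nat \<times> nat \<Rightarrow> int \<times> nat" where
  "rkey c = (content c, snd c)"

definition reading_word :: "(nat \<times> nat \<Rightarrow> nat) \<Rightarrow> nat list" where
  "reading_word T = map T (sorted_key_list_of_set rkey {c. T c \<noteq> 0})"

definition pos :: "nat list \<Rightarrow> nat \<Rightarrow> nat" where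
  "pos w x = (LEAST k. k < length w \<and> w ! k = x)"

definition desc_sig :: "(nat \<times> nat \<Rightarrow> nat) \<Rightarrow> nat \<Rightarrow> int" where
  "desc_sig T i = (if pos (reading_word T) i < pos (reading_word T) (i + 1) then 1 else -1)"

definition ndist :: "nat \<Rightarrow> nat \<Rightarrow> nat" where
  "ndist a b = (if a \<le> b then b - a else a - b)"

text \<open>The letter that i is swapped with by d_i on the word w (i itself if d_i is the identity).\<close>
definition partner :: "nat \<Rightarrow> nat list \<Rightarrow> nat" where
  "partner i w = (let p = pos w (i - 1); q = pos w i; r = pos w (i + 1) in
     if (p < q \<and> q < r) \<or> (r < q \<and> q < p) then i
     else if ndist q p > ndist q r then i - 1 else i + 1)"

definition swapv :: "nat \<Rightarrow> nat \<Rightarrow> nat \<Rightarrow> nat" where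
  "swapv a b x = (if x = a then b else if x = b then a else x)"

definition d_word :: "nat \<Rightarrow> nat list \<Rightarrow> nat list" where
  "d_word i w = map (swapv i (partner i w)) w"

definition d_tab :: "nat \<Rightarrow> (nat \<times> nat \<Rightarrow> nat) \<Rightarrow> (nat \<times> nat \<Rightarrow> nat)" where
  "d_tab i T = (\<lambda>c. swapv i (partner i (reading_word T)) (T c))"

text \<open>Type (n,N): signatures are in {+1,-1}^(N-1) (indices 1..N-1), edge sets E_i for 1<i<n.\<close>
definition signed_colored_graph ::
  "nat \<Rightarrow> nat \<Rightarrow> 'v set \<Rightarrow> ('v \<Rightarrow> nat \<Rightarrow> int) \<Rightarrow> (nat \<Rightarrow> 'v set set) \<Rightarrow> bool" where
  "signed_colored_graph n N V sig E \<longleftrightarrow> finite V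
     \<and> (\<forall>w\<in>V. \<forall>i. 1 \<le> i \<and> i < N \<longrightarrow> sig w i \<in> {1, -1})
     \<and> (\<forall>i. 1 < i \<and> i < n \<longrightarrow> (\<forall>e\<in>E i. e \<subseteq> V \<and> card e = 2))"

definition ax1 :: "nat \<Rightarrow> 'v set \<Rightarrow> ('v \<Rightarrow> nat \<Rightarrow> int) \<Rightarrow> (nat \<Rightarrow> 'v set set) \<Rightarrow> bool" where
  "ax1 n V sig E \<longleftrightarrow> (\<forall>w\<in>V. \<forall>i. 1 < i \<and> i < n \<longrightarrow>
      ((sig w (i - 1) = - sig w i) \<longleftrightarrow> (\<exists>x. {w, x} \<in> E i))
      \<and> (\<forall>x y. {w, x} \<in> E i \<and> {w, y} \<in> E i \<longrightarrow> x = y))"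

definition morphism ::
  "nat \<Rightarrow> nat \<Rightarrow> 'v set \<Rightarrow> ('v \<Rightarrow> nat \<Rightarrow> int) \<Rightarrow> (nat \<Rightarrow> 'v set set)
   \<Rightarrow> 'w set \<Rightarrow> ('w \<Rightarrow> nat \<Rightarrow> int) \<Rightarrow> (nat \<Rightarrow> 'w set set) \<Rightarrow> ('v \<Rightarrow> 'w) \<Rightarrow> bool" where
  "morphism n N V sig E W tau F phi \<longleftrightarrow>
     (\<forall>v\<in>V. phi v \<in> W)
     \<and> (\<forall>v\<in>V. \<forall>i. 1 \<le> i \<and> i < N \<longrightarrow> tau (phi v) i = sig v i)
     \<and> (\<forall>i. 1 < i \<and> i < n \<longrightarrow> (\<forall>u v. {u, v} \<in> E i \<longrightarrow> {phi u, phi v} \<in> F i))"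

definition ASYT :: "nat list \<Rightarrow> nat list \<Rightarrow> (nat \<times> nat \<Rightarrow> nat) \<Rightarrow> (nat \<times> nat \<Rightarrow> nat) set" where
  "ASYT rho la A = {T \<in> SYT rho. \<forall>c \<in> skew rho la. T c = A c}"

definition aug_edges :: "nat list \<Rightarrow> nat list \<Rightarrow> (nat \<times> nat \<Rightarrow> nat) \<Rightarrow> nat \<Rightarrow> (nat \<times> nat \<Rightarrow> nat) set set" where
  "aug_edges rho la A i = {{T, d_tab i T} | T. T \<in> ASYT rho la A \<and> d_tab i T \<noteq> T}"

end

theory Submission
  imports Defs
begin


lemma pos_nth: "distinct w \<Longrightarrow> k < length w \<Longrightarrow> pos w (w ! k) = k"
  unfolding pos_def
  by (rule Least_equality) (auto simp: nth_eq_iff_index_eq)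

lemma pos_in: "x \<in> set w \<Longrightarrow> pos w x < length w \<and> w ! pos w x = x"
  unfolding pos_def
  by (rule LeastI_ex) (auto simp: in_set_conv_nth)

lemma pos_inj: "x \<in> set w \<Longrightarrow> y \<in> set w \<Longrightarrow> pos w x = pos w y \<Longrightarrow> x = y"
  using pos_in by metis

lemma swapv_swapv: "swapv a b (swapv a b x) = x" by (auto simp: swapv_def)

lemma pos_map_swap: "pos (map (swapv a b) w) x = pos w (swapv a b x)"
proof -
  have "\<And>k. (k < length w \<and> map (swapv a b) w ! k = x) = (k < length w \<and> w!k = swapv a b x)"
    by (metis nth_map swapv_swapv)
  then show ?thesis unfolding pos_def by simp
qed

lemma swapv_id: "swapv a a = id" by (auto simp: swapv_def)

lemma partner_inv:
  assumes "i - 1 \<in> set w" "i \<in> set w" "i+1 \<in> set w" "i \<ge> 2"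
  shows "partner i (map (swapv i (partner i w)) w) = partner i w"
proof -
  define p where "p = pos w (i-1)"
  define q where "q = pos w i"
  define r where "r = pos w (i+1)"
  have d: "p \<noteq> q" "q \<noteq> r" "p \<noteq> r" unfolding p_def q_def r_def
    using pos_inj[of "i-1" w i] pos_inj[of i w "i+1"] pos_inj[of "i-1" w "i+1"] assms by auto
  have pw: "partner i w = (if (p < q \<and> q < r) \<or> (r < q \<and> q < p) then i
     else if ndist q p > ndist q r then i - 1 else i + 1)"
    unfolding partner_def p_def q_def r_def Let_def by simp
  consider "partner i w = i" | "partner i w = i - 1" | "partner i w = i + 1"
    using pw by metis
  then show ?thesis
  proof cases
    case 1 then show ?thesis by (simp add: swapv_id)
  next
    case 2
    have c: "\<not> ((p < q \<and> q < r) \<or> (r < q \<and> q < p))" "ndist q p > ndist q r"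
      using 2 pw assms(4) by (auto split: if_splits)
    have e: "swapv i (i-1) (i-1) = i" "swapv i (i-1) i = i - 1" "swapv i (i-1) (i+1) = i+1"
      using assms(4) by (auto simp: swapv_def)
    show ?thesis unfolding 2 unfolding partner_def Let_def pos_map_swap e
      using c d assms(4) unfolding p_def[symmetric] q_def[symmetric] r_def[symmetric]
      by (auto simp: ndist_def split: if_splits)
  next
    case 3
    have c: "\<not> ((p < q \<and> q < r) \<or> (r < q \<and> q < p))" "\<not> ndist q p > ndist q r"
      using 3 pw assms(4) by (auto split: if_splits)
    have e: "swapv i (i+1) (i-1) = i - 1" "swapv i (i+1) i = i + 1" "swapv i (i+1) (i+1) = i"
      using assms(4) by (auto simp: swapv_def)
    show ?thesis unfolding 3 unfolding partner_def Let_def pos_map_swap e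
      using c d assms(4) unfolding p_def[symmetric] q_def[symmetric] r_def[symmetric]
      by (auto simp: ndist_def split: if_splits)
  qed
qed

lemma finite_diagram: "finite (diagram la)"
proof -
  have "diagram la \<subseteq> {0..sum_list la} \<times> {0..length la}"
  proof
    fix c assume "c \<in> diagram la"
    then obtain i j where c: "c = (i,j)" "1 \<le> j" "j \<le> length la" "i \<le> la ! (j-1)"
      unfolding diagram_def by auto
    have "la ! (j-1) \<le> sum_list la" using c by (intro member_le_sum_list) auto
    then show "c \<in> {0..sum_list la} \<times> {0..length la}" using c by auto
  qed
  then show ?thesis by (rule finite_subset) auto
qed

lemma SYT_D:
  assumes "T \<in> SYT rho"
  shows "bij_betw T (diagram rho) {1..psize rho}" "\<And>c. c \<notin> diagram rho \<Longrightarrow> T c = 0"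
    "\<And>i j. (i, j) \<in> diagram rho \<Longrightarrow> (i + 1, j) \<in> diagram rho \<Longrightarrow> T (i, j) < T (i + 1, j)"
    "\<And>i j. (i, j) \<in> diagram rho \<Longrightarrow> (i, j + 1) \<in> diagram rho \<Longrightarrow> T (i, j) < T (i, j + 1)"
  using assms unfolding SYT_def mem_Collect_eq by (elim conjE; blast)+

lemma SYT_nz: "T \<in> SYT rho \<Longrightarrow> {c. T c \<noteq> 0} = diagram rho"
proof -
  assume T: "T \<in> SYT rho"
  have "\<And>c. c \<in> diagram rho \<Longrightarrow> T c \<noteq> 0"
  proof -
    fix c assume "c \<in> diagram rho"
    then have "T c \<in> {1..psize rho}" using bij_betwE[OF SYT_D(1)[OF T]] by blast
    then show "T c \<noteq> 0" by simp
  qed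
  note nz = this
  show ?thesis
  proof (rule set_eqI)
    fix c show "c \<in> {c. T c \<noteq> 0} \<longleftrightarrow> c \<in> diagram rho"
      using nz[of c] SYT_D(2)[OF T, of c] by (cases "c \<in> diagram rho") simp_all
  qed
qed

lemma ins_key_eq: "linorder.insort_key (\<le>) (f::'b \<Rightarrow> 'a::linorder) x xs = insort_key f x xs"
  by (induction xs) (simp_all add: linorder.insort_key.simps[OF linorder_class.linorder_axioms])

lemma skl_eq: "linorder.sorted_key_list_of_set (\<le>) (f::'b \<Rightarrow> 'a::linorder) = sorted_key_list_of_set f"
proof -
  have "linorder.insort_key (\<le>) f = insort_key f" by (intro ext) (rule ins_key_eq)
  then show ?thesis
  by (simp add: sorted_key_list_of_set_def linorder.sorted_key_list_of_set_def[OF linorder_class.linorder_axioms])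
qed

interpretation rk: folding_insort_key "(\<le>)" "(<)" "UNIV :: (nat \<times> nat) set" rkey
proof
  show "inj_on rkey UNIV" unfolding inj_on_def rkey_def content_def by auto
qed

definition RL :: "nat list \<Rightarrow> (nat \<times> nat) list" where
  "RL rho = sorted_key_list_of_set rkey (diagram rho)"

lemma RL_props: "set (RL rho) = diagram rho" "distinct (RL rho)"
  "sorted_wrt (<) (map rkey (RL rho))"
proof -
  show "set (RL rho) = diagram rho" unfolding RL_def
    using rk.set_sorted_key_list_of_set[OF subset_UNIV finite_diagram, unfolded skl_eq] .
  have "distinct (map rkey (RL rho))" unfolding RL_def
    using rk.distinct_sorted_key_list_of_set[OF subset_UNIV, unfolded skl_eq] .
  then show "distinct (RL rho)" by (simp add: distinct_map)
  show "sorted_wrt (<) (map rkey (RL rho))" unfolding RL_def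
    using rk.strict_sorted_key_list_of_set[OF subset_UNIV, unfolded skl_eq] .
qed

lemma rw_SYT: "T \<in> SYT rho \<Longrightarrow> reading_word T = map T (RL rho)"
proof -
  assume "T \<in> SYT rho"
  then have "{c. T c \<noteq> 0} = diagram rho" by (rule SYT_nz)
  then show ?thesis unfolding reading_word_def RL_def by metis
qed

lemma rw_set: "T \<in> SYT rho \<Longrightarrow> set (reading_word T) = {1..psize rho}"
  using rw_SYT[of T rho] RL_props(1)[of rho] SYT_D(1)[of T rho]
  by (simp add: bij_betw_def)

lemma rw_distinct: "T \<in> SYT rho \<Longrightarrow> distinct (reading_word T)"
  using rw_SYT[of T rho] RL_props(1,2)[of rho] SYT_D(1)[of T rho]
  by (simp add: bij_betw_def distinct_map)

lemma rw_pos: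
  assumes T: "T \<in> SYT rho" and u: "u \<in> diagram rho" and v: "v \<in> diagram rho"
  shows "(pos (reading_word T) (T u) < pos (reading_word T) (T v)) = (rkey u < rkey v)"
proof -
  let ?L = "RL rho"
  obtain ku where ku: "ku < length ?L" "?L ! ku = u" using u RL_props(1) by (metis in_set_conv_nth)
  obtain kv where kv: "kv < length ?L" "?L ! kv = v" using v RL_props(1) by (metis in_set_conv_nth)
  have pu: "pos (reading_word T) (T u) = ku"
    using pos_nth[OF rw_distinct[OF T], of ku] ku rw_SYT[OF T] by simp
  have pv: "pos (reading_word T) (T v) = kv"
    using pos_nth[OF rw_distinct[OF T], of kv] kv rw_SYT[OF T] by simp
  have s: "sorted_wrt (<) (map rkey ?L)" by (rule RL_props(3))
  have "ku < kv \<Longrightarrow> rkey u < rkey v"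
    using sorted_wrt_nth_less[OF s, of ku kv] ku kv by simp
  moreover have "kv < ku \<Longrightarrow> rkey v < rkey u"
    using sorted_wrt_nth_less[OF s, of kv ku] ku kv by simp
  ultimately show ?thesis using pu pv ku kv
    by (metis less_asym linorder_neqE_nat order_less_irrefl)
qed

lemma rw_comp:
  assumes "\<And>x. f x = 0 \<longleftrightarrow> x = 0"
  shows "reading_word (\<lambda>c. f (T c)) = map f (reading_word T)"
  unfolding reading_word_def using assms by simp

lemma partner_range: "partner i w \<in> {i - 1, i, i + 1}"
  unfolding partner_def Let_def by auto

lemma d_tab_inv:
  assumes T: "T \<in> SYT rho" and i: "2 \<le> i" "i + 1 \<le> psize rho"
  shows "d_tab i (d_tab i T) = T"
proof -
  define j where "j = partner i (reading_word T)"
  have j: "j \<in> {i-1, i, i+1}" unfolding j_def by (rule partner_range)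
  have dT: "d_tab i T = (\<lambda>c. swapv i j (T c))" unfolding d_tab_def j_def by simp
  have nz: "\<And>x. swapv i j x = 0 \<longleftrightarrow> x = 0" using j i by (auto simp: swapv_def)
  have rw: "reading_word (d_tab i T) = map (swapv i j) (reading_word T)"
    unfolding dT by (rule rw_comp[OF nz])
  have inset: "i - 1 \<in> set (reading_word T)" "i \<in> set (reading_word T)" "i + 1 \<in> set (reading_word T)"
    using rw_set[OF T] i by auto
  have "partner i (reading_word (d_tab i T)) = j"
    unfolding rw j_def by (rule partner_inv[OF inset i(1)])
  then show ?thesis unfolding d_tab_def[of i "d_tab i T"] by (simp add: dT swapv_swapv)
qed

lemma d_tab_desc:
  assumes T: "T \<in> SYT rho" and i: "2 \<le> i" "i + 1 \<le> psize rho" and ne: "d_tab i T \<noteq> T"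
  shows "desc_sig T (i - 1) = - desc_sig T i"
proof -
  let ?w = "reading_word T"
  define p where "p = pos ?w (i-1)"
  define q where "q = pos ?w i"
  define r where "r = pos ?w (i+1)"
  have inset: "i - 1 \<in> set ?w" "i \<in> set ?w" "i + 1 \<in> set ?w"
    using rw_set[OF T] i by auto
  have d: "p \<noteq> q" "q \<noteq> r" "p \<noteq> r" unfolding p_def q_def r_def
    using pos_inj[of "i-1" ?w i] pos_inj[of i ?w "i+1"] pos_inj[of "i-1" ?w "i+1"] inset i by auto
  have "partner i ?w \<noteq> i"
  proof
    assume "partner i ?w = i"
    then have "d_tab i T = T" unfolding d_tab_def by (simp add: swapv_def fun_eq_iff)
    with ne show False by simp
  qed
  then have nb: "\<not> ((p < q \<and> q < r) \<or> (r < q \<and> q < p))"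
    unfolding partner_def Let_def p_def q_def r_def by auto
  have e: "i - 1 + 1 = i" using i by simp
  show ?thesis unfolding desc_sig_def e using nb d
    unfolding p_def[symmetric] q_def[symmetric] r_def[symmetric] by auto
qed



definition dc :: "(nat \<times> nat) set \<Rightarrow> bool" where
  "dc D \<longleftrightarrow> (\<forall>i j. (i,j) \<in> D \<longrightarrow> 1 \<le> i \<and> 1 \<le> j \<and>
     (\<forall>i' j'. 1 \<le> i' \<and> i' \<le> i \<and> 1 \<le> j' \<and> j' \<le> j \<longrightarrow> (i',j') \<in> D))"

lemma dc_down: "dc D \<Longrightarrow> (i,j) \<in> D \<Longrightarrow> 1 \<le> i' \<Longrightarrow> i' \<le> i \<Longrightarrow> 1 \<le> j' \<Longrightarrow> j' \<le> j \<Longrightarrow> (i',j') \<in> D"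
  unfolding dc_def by blast

lemma dc_pos: "dc D \<Longrightarrow> (i,j) \<in> D \<Longrightarrow> 1 \<le> i \<and> 1 \<le> j"
  unfolding dc_def by blast

definition corner :: "(nat \<times> nat) set \<Rightarrow> nat \<times> nat \<Rightarrow> bool" where
  "corner D c \<longleftrightarrow> c \<in> D \<and> (fst c + 1, snd c) \<notin> D \<and> (fst c, snd c + 1) \<notin> D"

lemma dc_remove:
  assumes D: "dc D" and c: "corner D c"
  shows "dc (D - {c})"
  unfolding dc_def
proof (intro allI impI)
  fix i j assume ij: "(i,j) \<in> D - {c}"
  have p1: "1 \<le> i \<and> 1 \<le> j" using dc_pos[OF D, of i j] ij by auto
  have "\<forall>i' j'. 1 \<le> i' \<and> i' \<le> i \<and> 1 \<le> j' \<and> j' \<le> j \<longrightarrow> (i', j') \<in> D - {c}"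
  proof (intro allI impI)
    fix i' j' assume h: "1 \<le> i' \<and> i' \<le> i \<and> 1 \<le> j' \<and> j' \<le> j"
    have "(i',j') \<in> D" using dc_down[OF D, of i j i' j'] ij h by auto
    moreover have "(i',j') \<noteq> c"
    proof
      assume e: "(i',j') = c"
      have "(i,j) \<noteq> c" using ij by auto
      then have "i' < i \<or> j' < j" using e h by auto
      then show False
      proof
        assume "i' < i"
        then have "(i'+1, j') \<in> D" using dc_down[OF D, of i j "i'+1" j'] ij h by auto
        with c e show False unfolding corner_def by auto
      next
        assume "j' < j"
        then have "(i', j'+1) \<in> D" using dc_down[OF D, of i j i' "j'+1"] ij h by auto
        with c e show False unfolding corner_def by auto
      qed
    qed
    ultimately show "(i', j') \<in> D - {c}" by simp
  qed
  with p1 show "1 \<le> i \<and> 1 \<le> j \<and> (\<forall>i' j'. 1 \<le> i' \<and> i' \<le> i \<and> 1 \<le> j' \<and> j' \<le> j \<longrightarrow> (i', j') \<in> D - {c})"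
    by blast
qed

lemma dc_diagram:
  assumes "is_partition la"
  shows "dc (diagram la)"
  unfolding dc_def
proof (intro allI impI)
  fix i j assume ij: "(i,j) \<in> diagram la"
  then have ij': "1 \<le> j" "j \<le> length la" "1 \<le> i" "i \<le> la ! (j - 1)" unfolding diagram_def by auto
  have "\<forall>i' j'. 1 \<le> i' \<and> i' \<le> i \<and> 1 \<le> j' \<and> j' \<le> j \<longrightarrow> (i', j') \<in> diagram la"
  proof (intro allI impI)
    fix i' j' assume h: "1 \<le> i' \<and> i' \<le> i \<and> 1 \<le> j' \<and> j' \<le> j"
    have s: "sorted_wrt (\<ge>) la" using assms unfolding is_partition_def by simp
    have "la ! (j - 1) \<le> la ! (j' - 1)"
    proof (cases "j' = j")
      case False
      then have "j' - 1 < j - 1" using h by auto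
      then show ?thesis using sorted_wrt_nth_less[OF s, of "j'-1" "j-1"] ij' by auto
    qed simp
    then show "(i', j') \<in> diagram la" using h ij' unfolding diagram_def by auto
  qed
  with ij' show "1 \<le> i \<and> 1 \<le> j \<and> (\<forall>i' j'. 1 \<le> i' \<and> i' \<le> i \<and> 1 \<le> j' \<and> j' \<le> j \<longrightarrow> (i', j') \<in> diagram la)"
    by blast
qed

lemma bij_upd:
  fixes m N :: nat
  assumes b: "bij_betw B S {m+1..N}" and c: "c \<notin> S" and m: "m \<le> N"
  shows "bij_betw (B(c := m)) (insert c S) {m..N}"
proof -
  have "\<And>a. a \<in> S \<Longrightarrow> B a = (B(c:=m)) a" using c by auto
  then have b1: "bij_betw (B(c:=m)) S {m+1..N}"
    using bij_betw_cong[of S B "B(c:=m)" "{m+1..N}"] b by simp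
  have nbb: "(B(c:=m)) c \<notin> {m+1..N}" by auto
  have "bij_betw (B(c:=m)) (S \<union> {c}) ({m+1..N} \<union> {(B(c:=m)) c})"
    using notIn_Un_bij_betw3[of c S "B(c:=m)" "{m+1..N}", OF c nbb] b1 by blast
  moreover have "{m+1..N} \<union> {(B(c:=m)) c} = {m..N}" using m by auto
  moreover have "S \<union> {c} = insert c S" by auto
  ultimately show ?thesis by metis
qed

definition nb :: "nat \<times> nat \<Rightarrow> nat \<times> nat \<Rightarrow> bool" where
  "nb u v \<longleftrightarrow> v = (fst u + 1, snd u) \<or> v = (fst u, snd u + 1)"

definition std :: "nat list \<Rightarrow> (nat \<times> nat) set \<Rightarrow> (nat \<times> nat \<Rightarrow> nat) \<Rightarrow> bool" where
  "std rho D B \<longleftrightarrow> (\<forall>u v. nb u v \<and> u \<in> diagram rho - D \<and> v \<in> diagram rho - D \<longrightarrow> B u < B v)"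

definition ASY :: "nat list \<Rightarrow> (nat \<times> nat) set \<Rightarrow> (nat \<times> nat \<Rightarrow> nat) \<Rightarrow> (nat \<times> nat \<Rightarrow> nat) set" where
  "ASY rho D B = {T \<in> SYT rho. \<forall>x \<in> diagram rho - D. T x = B x}"

lemma SYT_nb: "T \<in> SYT rho \<Longrightarrow> nb u v \<Longrightarrow> u \<in> diagram rho \<Longrightarrow> v \<in> diagram rho \<Longrightarrow> T u < T v"
  unfolding nb_def using SYT_D(3,4)[of T rho "fst u" "snd u"] by (cases u) auto

lemma SYT_I:
  assumes "bij_betw T (diagram rho) {1..psize rho}" "\<And>c. c \<notin> diagram rho \<Longrightarrow> T c = 0"
    "\<And>u v. nb u v \<Longrightarrow> u \<in> diagram rho \<Longrightarrow> v \<in> diagram rho \<Longrightarrow> T u < T v"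
  shows "T \<in> SYT rho"
  unfolding SYT_def using assms by (auto simp: nb_def)

lemma diagram_pos: "(i,j) \<in> diagram rho \<Longrightarrow> 1 \<le> i \<and> 1 \<le> j"
  unfolding diagram_def by auto

lemma EX:
  "finite D \<Longrightarrow> dc D \<Longrightarrow> D \<subseteq> diagram rho \<Longrightarrow> card D = m \<Longrightarrow> m \<le> psize rho \<Longrightarrow>
   bij_betw B (diagram rho - D) {m+1..psize rho} \<Longrightarrow> std rho D B \<Longrightarrow> ASY rho D B \<noteq> {}"
proof (induction m arbitrary: D B)
  case 0
  then have D: "D = {}" by simp
  define T where "T = (\<lambda>x. if x \<in> diagram rho then B x else 0)"
  have "T \<in> SYT rho"
  proof (rule SYT_I)
    show "bij_betw T (diagram rho) {1..psize rho}"
      using 0 D bij_betw_cong[of "diagram rho" T B] unfolding T_def by simp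
    show "\<And>c. c \<notin> diagram rho \<Longrightarrow> T c = 0" unfolding T_def by simp
    show "\<And>u v. nb u v \<Longrightarrow> u \<in> diagram rho \<Longrightarrow> v \<in> diagram rho \<Longrightarrow> T u < T v"
      using 0(7) D unfolding std_def T_def by auto
  qed
  then have "T \<in> ASY rho D B" unfolding ASY_def T_def by simp
  then show ?case by blast
next
  case (Suc m)
  have Dne: "D \<noteq> {}" using Suc by auto
  define s where "s = Max ((\<lambda>x. fst x + snd x) ` D)"
  have "s \<in> (\<lambda>x. fst x + snd x) ` D" unfolding s_def using Suc(2) Dne by (intro Max_in) auto
  then obtain c where cD: "c \<in> D" and cs: "s = fst c + snd c" by auto
  have cmax: "\<And>x. x \<in> D \<Longrightarrow> fst x + snd x \<le> fst c + snd c"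
  proof -
    fix x assume x: "x \<in> D"
    have "fst x + snd x \<le> s" unfolding s_def using Suc(2) x by (intro Max_ge) auto
    then show "fst x + snd x \<le> fst c + snd c" using cs by simp
  qed
  have cc: "corner D c" unfolding corner_def using cD cmax[of "(fst c + 1, snd c)"] cmax[of "(fst c, snd c + 1)"]
    by auto
  define D' where "D' = D - {c}"
  define B' where "B' = B(c := m + 1)"
  have cdiag: "c \<in> diagram rho" using cD Suc(4) by auto
  have e1: "diagram rho - D' = insert c (diagram rho - D)" unfolding D'_def using cdiag cD by auto
  have cn: "c \<notin> diagram rho - D" using cD by simp
  have b2: "bij_betw B (diagram rho - D) {(m+1)+1..psize rho}" using Suc(7) by simp
  have m6: "m + 1 \<le> psize rho" using Suc(6) by simp
  have bij': "bij_betw B' (diagram rho - D') {m+1..psize rho}"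
    unfolding e1 B'_def by (rule bij_upd[OF b2 cn m6])
  have std': "std rho D' B'"
    unfolding std_def
  proof (intro allI impI)
    fix u v assume h: "nb u v \<and> u \<in> diagram rho - D' \<and> v \<in> diagram rho - D'"
    show "B' u < B' v"
    proof (cases "u = c")
      case True
      then have "v \<notin> D" using cc h unfolding corner_def nb_def by auto
      then have "B v \<in> {Suc m + 1..psize rho}" using h bij_betwE[OF Suc(7)] by auto
      moreover have "v \<noteq> c" using h True unfolding nb_def by (cases c) auto
      ultimately show ?thesis using True unfolding B'_def by auto
    next
      case False
      then have uD: "u \<notin> D" using h unfolding D'_def by auto
      show ?thesis
      proof (cases "v = c")
        case True
        obtain i j where u: "u = (i,j)" by force
        have "1 \<le> i \<and> 1 \<le> j" using diagram_pos[of i j rho] h u by auto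
        then have "u \<in> D" using dc_down[OF Suc(3), of "fst c" "snd c" i j] cD h True u unfolding nb_def
          by auto
        with uD show ?thesis by simp
      next
        case False
        have "u \<in> diagram rho - D" "v \<in> diagram rho - D" using h uD False unfolding D'_def by auto
        then have "B u < B v" using Suc(8) h unfolding std_def by blast
        then show ?thesis using False \<open>u \<noteq> c\<close> unfolding B'_def by simp
      qed
    qed
  qed
  have "ASY rho D' B' \<noteq> {}"
  proof (rule Suc.IH)
    show "finite D'" "dc D'" "D' \<subseteq> diagram rho" "card D' = m" "m \<le> psize rho"
      using Suc dc_remove[OF Suc(3) cc] cD unfolding D'_def by auto
  qed (use bij' std' in auto)
  then obtain T where T: "T \<in> ASY rho D' B'" by auto
  have "T \<in> ASY rho D B" using T cD unfolding ASY_def D'_def B'_def by auto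
  then show ?case by blast
qed



lemma swapv_bij: "a \<in> S \<Longrightarrow> b \<in> S \<Longrightarrow> bij_betw (swapv a b) S S"
  by (rule bij_betw_byWitness[where f'="swapv a b"]) (auto simp: swapv_def)

lemma swap_mono:
  fixes x y a :: nat
  assumes "x < y" "\<not> (x = a \<and> y = a + 1)"
  shows "swapv a (a+1) x < swapv a (a+1) y"
  using assms unfolding swapv_def by auto

lemma swap_SYT:
  assumes T: "T \<in> SYT rho" and a: "1 \<le> a" "a + 1 \<le> psize rho"
    and no: "\<And>u v. nb u v \<Longrightarrow> u \<in> diagram rho \<Longrightarrow> v \<in> diagram rho \<Longrightarrow> \<not> (T u = a \<and> T v = a + 1)"
  shows "(\<lambda>x. swapv a (a+1) (T x)) \<in> SYT rho"
proof (rule SYT_I)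
  have "bij_betw (swapv a (a+1) \<circ> T) (diagram rho) {1..psize rho}"
    using bij_betw_trans[OF SYT_D(1)[OF T] swapv_bij[of a "{1..psize rho}" "a+1"]] a by auto
  then show "bij_betw (\<lambda>x. swapv a (a+1) (T x)) (diagram rho) {1..psize rho}"
    by (simp add: comp_def)
  show "\<And>c. c \<notin> diagram rho \<Longrightarrow> swapv a (a + 1) (T c) = 0"
    using SYT_D(2)[OF T] a by (auto simp: swapv_def)
  show "\<And>u v. nb u v \<Longrightarrow> u \<in> diagram rho \<Longrightarrow> v \<in> diagram rho \<Longrightarrow>
     swapv a (a + 1) (T u) < swapv a (a + 1) (T v)"
    using swap_mono SYT_nb[OF T] no by blast
qed

lemma partner_compute:
  assumes T: "T \<in> SYT rho" and i: "2 \<le> i"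
    and u: "u \<in> diagram rho" "T u = i - 1" and w: "w \<in> diagram rho" "T w = i"
    and z: "z \<in> diagram rho" "T z = i + 1"
    and o1: "rkey w < rkey u" and o2: "rkey u < rkey z"
  shows "partner i (reading_word T) = i + 1"
proof -
  let ?w = "reading_word T"
  have "pos ?w (T w) < pos ?w (T u)" using rw_pos[OF T w(1) u(1)] o1 by simp
  moreover have "pos ?w (T u) < pos ?w (T z)" using rw_pos[OF T u(1) z(1)] o2 by simp
  ultimately show ?thesis unfolding partner_def Let_def using u w z
    by (auto simp: ndist_def)
qed

lemma rkey_less: "content u < content v \<Longrightarrow> rkey u < rkey v"
  unfolding rkey_def by (simp add: less_prod_def')

lemma ASY_SYT: "X \<in> ASY rho D B \<Longrightarrow> X \<in> SYT rho" unfolding ASY_def by simp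

lemma ASY_vals:
  assumes X: "X \<in> ASY rho D B" and b: "bij_betw B (diagram rho - D) {n+1..psize rho}"
    and D: "D \<subseteq> diagram rho" and x: "x \<in> D"
  shows "1 \<le> X x \<and> X x \<le> n"
proof -
  have XS: "X \<in> SYT rho" using X by (rule ASY_SYT)
  have xd: "x \<in> diagram rho" using D x by auto
  have r: "X x \<in> {1..psize rho}" using bij_betwE[OF SYT_D(1)[OF XS]] xd by blast
  have "\<not> X x > n"
  proof
    assume "X x > n"
    then have "X x \<in> B ` (diagram rho - D)" using r bij_betw_imp_surj_on[OF b] by auto
    then obtain y where y: "y \<in> diagram rho - D" "B y = X x" by auto
    have "X y = B y" using X y(1) unfolding ASY_def by auto
    then have "y = x" using y xd bij_betw_imp_inj_on[OF SYT_D(1)[OF XS]] unfolding inj_on_def by auto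
    with y x show False by simp
  qed
  then show ?thesis using r by auto
qed

lemma ASY_find:
  assumes X: "X \<in> ASY rho D B" and b: "bij_betw B (diagram rho - D) {n+1..psize rho}"
    and n: "1 \<le> n" "n \<le> psize rho"
  shows "\<exists>x\<in>D. X x = n"
proof -
  have XS: "X \<in> SYT rho" using X by (rule ASY_SYT)
  have "n \<in> X ` diagram rho" using bij_betw_imp_surj_on[OF SYT_D(1)[OF XS]] n by auto
  then obtain x where x: "x \<in> diagram rho" "X x = n" by auto
  have "x \<in> D"
  proof (rule ccontr)
    assume "x \<notin> D"
    then have xx: "x \<in> diagram rho - D" using x by simp
    have "X x = B x" using X xx unfolding ASY_def by blast
    moreover have "B x \<in> {n+1..psize rho}" using bij_betwE[OF b] xx by blast
    ultimately show False using x by simp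
  qed
  with x show ?thesis by auto
qed

lemma ASY_corner:
  assumes X: "X \<in> ASY rho D B" and b: "bij_betw B (diagram rho - D) {n+1..psize rho}"
    and D: "D \<subseteq> diagram rho" and x: "x \<in> D" "X x = n"
  shows "corner D x"
proof -
  have XS: "X \<in> SYT rho" using X by (rule ASY_SYT)
  have "\<And>v. nb x v \<Longrightarrow> v \<notin> D"
  proof
    fix v assume v: "nb x v" "v \<in> D"
    have "X x < X v" using SYT_nb[OF XS v(1)] D x v by auto
    moreover have "X v \<le> n" using ASY_vals[OF X b D v(2)] by simp
    ultimately show False using x by simp
  qed
  then show ?thesis unfolding corner_def nb_def using x by auto
qed

lemma ASY_upd: "X \<in> ASY rho D B \<Longrightarrow> X c = m \<Longrightarrow> X \<in> ASY rho (D - {c}) (B(c := m))"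
  unfolding ASY_def by auto

lemma ASY_sub:
  assumes "X \<in> ASY rho D1 B1" "D1 \<subseteq> D2" "\<And>x. x \<in> diagram rho - D2 \<Longrightarrow> B1 x = B2 x"
  shows "X \<in> ASY rho D2 B2"
  unfolding ASY_def
proof (intro CollectI conjI ballI)
  show "X \<in> SYT rho" using assms(1) by (rule ASY_SYT)
  fix x assume x: "x \<in> diagram rho - D2"
  then have "x \<in> diagram rho - D1" using assms(2) by blast
  then have "X x = B1 x" using assms(1) unfolding ASY_def by blast
  then show "X x = B2 x" using assms(3)[OF x] by simp
qed

lemma ASY_empty: "X \<in> ASY rho {} B \<Longrightarrow> X' \<in> ASY rho {} B \<Longrightarrow> X = X'"
proof
  fix x assume X: "X \<in> ASY rho {} B" and X': "X' \<in> ASY rho {} B"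
  show "X x = X' x"
  proof (cases "x \<in> diagram rho")
    case True then show ?thesis using X X' unfolding ASY_def by auto
  next
    case False then show ?thesis using SYT_D(2)[OF ASY_SYT[OF X]] SYT_D(2)[OF ASY_SYT[OF X']] by auto
  qed
qed

lemma std_lemma:
  assumes X: "X \<in> ASY rho D B" and b: "bij_betw B (diagram rho - D) {n+1..psize rho}"
    and dcD: "dc D" and D: "D \<subseteq> diagram rho" and P: "P \<subseteq> D"
    and B3a: "\<And>x. x \<notin> P \<Longrightarrow> B3 x = B x" and B3b: "\<And>x. x \<in> P \<Longrightarrow> B3 x \<le> n"
    and B3c: "\<And>u v. nb u v \<Longrightarrow> u \<in> P \<Longrightarrow> v \<in> P \<Longrightarrow> B3 u < B3 v"
  shows "std rho (D - P) B3"
  unfolding std_def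
proof (intro allI impI)
  fix u v assume h: "nb u v \<and> u \<in> diagram rho - (D - P) \<and> v \<in> diagram rho - (D - P)"
  have XS: "X \<in> SYT rho" using X by (rule ASY_SYT)
  show "B3 u < B3 v"
  proof (cases "u \<in> P")
    case uP: True
    show ?thesis
    proof (cases "v \<in> P")
      case True then show ?thesis using B3c h uP by blast
    next
      case False
      then have "v \<in> diagram rho - D" using h by auto
      then have "B v \<ge> n + 1" using bij_betwE[OF b] by auto
      then show ?thesis using B3a[OF False] B3b[OF uP] by simp
    qed
  next
    case uP: False
    then have uD: "u \<in> diagram rho - D" using h by auto
    show ?thesis
    proof (cases "v \<in> P")
      case True
      then have vD: "v \<in> D" using P by auto
      obtain i j where u: "u = (i,j)" by force
      have "1 \<le> i \<and> 1 \<le> j" using diagram_pos[of i j rho] uD u by auto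
      then have "u \<in> D" using h vD dc_down[OF dcD, of "fst v" "snd v" i j] u unfolding nb_def by auto
      with uD show ?thesis by simp
    next
      case False
      then have vD: "v \<in> diagram rho - D" using h by auto
      have "X u < X v" using SYT_nb[OF XS] h uD vD by auto
      moreover have "X u = B u" "X v = B v" using X uD vD unfolding ASY_def by auto
      ultimately show ?thesis using B3a uP False by simp
    qed
  qed
qed



lemma find_d:
  assumes dcD: "dc D" and fin: "finite D" and k: "k = Max (snd ` D)"
    and xc: "xc = Max {i. (i,k) \<in> D}" and cD: "(xc,k) \<in> D"
    and c1: "corner D (a,y)" and ne: "(a,y) \<noteq> (xc,k)"
  shows "\<exists>d. d \<in> D \<and> d \<noteq> (xc,k) \<and> d \<noteq> (a,y) \<and> (\<forall>v. nb d v \<and> v \<in> D \<longrightarrow> v = (xc,k) \<or> v = (a,y))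
     \<and> content (xc,k) < content d \<and> content d < content (a,y)"
proof -
  have aD: "(a,y) \<in> D" using c1 unfolding corner_def by simp
  have pa: "1 \<le> a" "1 \<le> y" using dc_pos[OF dcD aD] by auto
  have pc: "1 \<le> xc" "1 \<le> k" using dc_pos[OF dcD cD] by auto
  have rowmax: "\<And>i j. (i,j) \<in> D \<Longrightarrow> j \<le> k"
    unfolding k using fin by (intro Max_ge) force+
  have finrow: "\<And>j. finite {i. (i,j) \<in> D}"
  proof -
    fix j have "{i. (i,j) \<in> D} \<subseteq> fst ` D" by force
    then show "finite {i. (i,j) \<in> D}" using fin finite_subset by blast
  qed
  have colmax: "\<And>i. (i,k) \<in> D \<Longrightarrow> i \<le> xc"
    unfolding xc using finrow by (intro Max_ge) auto
  have c1r: "(a+1, y) \<notin> D" "(a, y+1) \<notin> D" using c1 unfolding corner_def by auto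
  have yk: "y \<le> k" using rowmax[OF aD] .
  have "y \<noteq> k"
  proof
    assume yk': "y = k"
    then have "a \<le> xc" using colmax aD by simp
    then have "a < xc" using ne yk' by auto
    then have "(a+1, k) \<in> D" using dc_down[OF dcD cD, of "a+1" k] pc by auto
    with c1r yk' show False by simp
  qed
  with yk have yk2: "y < k" by simp
  have aj: "\<And>j. j > y \<Longrightarrow> (a, j) \<notin> D"
  proof
    fix j assume j: "j > y" "(a,j) \<in> D"
    then have "(a, y+1) \<in> D" using dc_down[OF dcD j(2), of a "y+1"] pa by auto
    with c1r show False by simp
  qed
  have xca: "xc < a"
  proof (rule ccontr)
    assume "\<not> xc < a"
    then have "(a,k) \<in> D" using dc_down[OF dcD cD, of a k] pa pc by auto
    with aj[OF yk2] show False by simp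
  qed
  show ?thesis
  proof (cases "y + 1 = k")
    case True
    define d where "d = (a - 1, y)"
    have dD: "d \<in> D" unfolding d_def using dc_down[OF dcD aD, of "a-1" y] pa xca pc by auto
    have "d \<noteq> (xc,k)" "d \<noteq> (a,y)" unfolding d_def using True xca pc by auto
    moreover have "\<forall>v. nb d v \<and> v \<in> D \<longrightarrow> v = (xc,k) \<or> v = (a,y)"
    proof (intro allI impI)
      fix v assume v: "nb d v \<and> v \<in> D"
      then have "v = (a, y) \<or> v = (a - 1, k)" unfolding nb_def d_def using True xca pc by auto
      moreover have "v = (a - 1, k) \<Longrightarrow> v = (xc, k)"
      proof -
        assume vv: "v = (a - 1, k)"
        then have "a - 1 \<le> xc" using colmax v by auto
        then show "v = (xc,k)" using vv xca by auto
      qed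
      ultimately show "v = (xc,k) \<or> v = (a,y)" by blast
    qed
    moreover have "content (xc,k) < content d" "content d < content (a,y)"
      unfolding d_def content_def using True xca pc pa by auto
    ultimately show ?thesis using dD by blast
  next
    case False
    then have yk3: "y + 1 < k" using yk2 by simp
    define e where "e = Max {i. (i, k - 1) \<in> D}"
    have xck: "(xc, k - 1) \<in> D" using dc_down[OF dcD cD, of xc "k-1"] pc yk3 by auto
    have eD: "(e, k - 1) \<in> D" unfolding e_def using Max_in[OF finrow[of "k-1"]] xck by auto
    have emax: "\<And>i. (i, k-1) \<in> D \<Longrightarrow> i \<le> e" unfolding e_def using finrow by (intro Max_ge) auto
    have xce: "xc \<le> e" using emax[OF xck] .
    have ea: "e \<le> a"
    proof (rule ccontr)
      assume "\<not> e \<le> a"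
      then have "(a+1, y) \<in> D" using dc_down[OF dcD eD, of "a+1" y] pa yk3 by auto
      with c1r show False by simp
    qed
    define d where "d = (e, k - 1)"
    have "d \<noteq> (xc,k)" "d \<noteq> (a,y)" unfolding d_def using yk3 by auto
    moreover have "\<forall>v. nb d v \<and> v \<in> D \<longrightarrow> v = (xc,k) \<or> v = (a,y)"
    proof (intro allI impI)
      fix v assume v: "nb d v \<and> v \<in> D"
      then have "v = (e+1, k-1) \<or> v = (e, k)" unfolding nb_def d_def using yk3 by auto
      moreover have "v \<noteq> (e+1, k-1)" using emax[of "e+1"] v by auto
      moreover have "v = (e, k) \<Longrightarrow> v = (xc, k)" using colmax[of e] v xce by auto
      ultimately show "v = (xc,k) \<or> v = (a,y)" by blast
    qed
    moreover have "content (xc,k) < content d" "content d < content (a,y)"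
      unfolding d_def content_def using yk3 xce ea pc pa by auto
    ultimately show ?thesis using eD d_def by blast
  qed
qed



definition R :: "nat list \<Rightarrow> nat \<Rightarrow> ((nat \<times> nat \<Rightarrow> nat) \<times> (nat \<times> nat \<Rightarrow> nat)) set" where
  "R rho m = {(X, d_tab i X) | X i. X \<in> SYT rho \<and> 1 < i \<and> i < m \<and> i + 1 \<le> psize rho \<and> d_tab i X \<noteq> X}"

definition Rs :: "nat list \<Rightarrow> nat \<Rightarrow> ((nat \<times> nat \<Rightarrow> nat) \<times> (nat \<times> nat \<Rightarrow> nat)) set" where
  "Rs rho m = R rho m \<union> (R rho m)\<inverse>"

lemma Rs_mono: "m \<le> m' \<Longrightarrow> (Rs rho m)\<^sup>* \<subseteq> (Rs rho m')\<^sup>*"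
proof (rule rtrancl_mono)
  assume "m \<le> m'"
  then have "R rho m \<subseteq> R rho m'" unfolding R_def by fastforce
  then show "Rs rho m \<subseteq> Rs rho m'" unfolding Rs_def by auto
qed

lemma Rs_sym: "(x,y) \<in> (Rs rho m)\<^sup>* \<Longrightarrow> (y,x) \<in> (Rs rho m)\<^sup>*"
proof -
  have e: "(Rs rho m)\<inverse> = Rs rho m" unfolding Rs_def by auto
  assume "(x,y) \<in> (Rs rho m)\<^sup>*"
  then have "(y,x) \<in> ((Rs rho m)\<inverse>)\<^sup>*" by (rule rtrancl_converseI)
  then show ?thesis using e by simp
qed

lemma corner_nb: "corner D u \<Longrightarrow> nb u v \<Longrightarrow> v \<notin> D"
  by (auto simp: corner_def nb_def)

lemma nb_irrefl: "\<not> nb u u"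
  by (cases u) (auto simp: nb_def)

lemma Conn:
  "finite D \<Longrightarrow> dc D \<Longrightarrow> D \<subseteq> diagram rho \<Longrightarrow> card D = n \<Longrightarrow>
   bij_betw B (diagram rho - D) {n+1..psize rho} \<Longrightarrow> T \<in> ASY rho D B \<Longrightarrow> T' \<in> ASY rho D B \<Longrightarrow>
   (T,T') \<in> (Rs rho n)\<^sup>*"
proof (induction n arbitrary: D B T T')
  case 0
  then have "D = {}" by simp
  then have "T = T'" using ASY_empty 0 by blast
  then show ?case by simp
next
  case (Suc n')
  define n where "n = Suc n'"
  have fin: "finite D" and dcD: "dc D" and Dsub: "D \<subseteq> diagram rho" and cardD: "card D = n"
    and bij: "bij_betw B (diagram rho - D) {n+1..psize rho}" and T: "T \<in> ASY rho D B"
    and T': "T' \<in> ASY rho D B"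
    using Suc.prems unfolding n_def by auto
  have TS: "T \<in> SYT rho" using T by (rule ASY_SYT)
  have cdiag: "card (diagram rho) = psize rho" using bij_betw_same_card[OF SYT_D(1)[OF TS]] by simp
  have nN: "n \<le> psize rho" using card_mono[OF finite_diagram Dsub] cardD cdiag by simp
  have Dne: "D \<noteq> {}" using cardD n_def by auto
  define k where "k = Max (snd ` D)"
  have "k \<in> snd ` D" unfolding k_def using fin Dne by (intro Max_in) auto
  then obtain i0 where i0: "(i0,k) \<in> D" by force
  have finrow: "finite {i. (i,k) \<in> D}"
  proof -
    have "{i. (i,k) \<in> D} \<subseteq> fst ` D" by force
    then show ?thesis using fin finite_subset by blast
  qed
  define xc where "xc = Max {i. (i,k) \<in> D}"
  have cD0: "(xc,k) \<in> D" unfolding xc_def using Max_in[OF finrow] i0 by auto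
  define c where "c = (xc,k)"
  have cD: "c \<in> D" using cD0 c_def by simp
  have cc: "corner D c"
  proof -
    have "(xc+1, k) \<notin> D"
    proof
      assume "(xc+1,k) \<in> D"
      then have "xc + 1 \<le> xc" unfolding xc_def using finrow by (intro Max_ge) auto
      then show False by simp
    qed
    moreover have "(xc, k+1) \<notin> D"
    proof
      assume "(xc,k+1) \<in> D"
      then have "k + 1 \<le> k" unfolding k_def using fin by (intro Max_ge) force+
      then show False by simp
    qed
    ultimately show ?thesis unfolding corner_def c_def using cD0 by simp
  qed
  have IHr: "\<And>e Z Z'. corner D e \<Longrightarrow> Z \<in> ASY rho (D - {e}) (B(e:=n)) \<Longrightarrow>
      Z' \<in> ASY rho (D - {e}) (B(e:=n)) \<Longrightarrow> (Z,Z') \<in> (Rs rho n)\<^sup>*"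
  proof -
    fix e Z Z' assume e: "corner D e" and Z: "Z \<in> ASY rho (D - {e}) (B(e:=n))"
      and Z': "Z' \<in> ASY rho (D - {e}) (B(e:=n))"
    have eD: "e \<in> D" using e unfolding corner_def by simp
    have "(Z,Z') \<in> (Rs rho n')\<^sup>*"
    proof (rule Suc.IH[of "D - {e}" "B(e:=n)"])
      show "finite (D - {e})" using fin by simp
      show "dc (D - {e})" by (rule dc_remove[OF dcD e])
      show "D - {e} \<subseteq> diagram rho" using Dsub by auto
      show "card (D - {e}) = n'" using cardD eD fin n_def by simp
      have "diagram rho - (D - {e}) = insert e (diagram rho - D)" using eD Dsub by auto
      moreover have "bij_betw (B(e:=n)) (insert e (diagram rho - D)) {n..psize rho}"
        by (rule bij_upd[OF bij]) (use eD nN in auto)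
      ultimately show "bij_betw (B(e:=n)) (diagram rho - (D - {e})) {n'+1..psize rho}"
        using n_def by simp
    qed (fact Z, fact Z')
    then show "(Z,Z') \<in> (Rs rho n)\<^sup>*" using Rs_mono[of n' n rho] n_def by auto
  qed
  have to_c: "\<And>X. X \<in> ASY rho D B \<Longrightarrow> \<exists>Y \<in> ASY rho (D - {c}) (B(c:=n)). (X,Y) \<in> (Rs rho n)\<^sup>*"
  proof -
    fix X assume X: "X \<in> ASY rho D B"
    have XS: "X \<in> SYT rho" using X by (rule ASY_SYT)
    obtain c1 where c1D: "c1 \<in> D" and Xc1: "X c1 = n" using ASY_find[OF X bij] nN n_def by auto
    have cc1: "corner D c1" by (rule ASY_corner[OF X bij Dsub c1D Xc1])
    show "\<exists>Y \<in> ASY rho (D - {c}) (B(c:=n)). (X,Y) \<in> (Rs rho n)\<^sup>*"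
    proof (cases "c1 = c")
      case True
      then have "X \<in> ASY rho (D - {c}) (B(c:=n))" using ASY_upd[OF X, of c n] Xc1 by simp
      then show ?thesis by blast
    next
      case False
      obtain a y where ay: "c1 = (a,y)" by force
      obtain d where dD: "d \<in> D" and dc: "d \<noteq> c" and dc1: "d \<noteq> c1"
        and dnb: "\<forall>v. nb d v \<and> v \<in> D \<longrightarrow> v = c \<or> v = c1"
        and ct1: "content c < content d" and ct2: "content d < content c1"
        using find_d[OF dcD fin k_def xc_def cD0 cc1[unfolded ay]] False unfolding c_def ay by blast
      have "card {c1, c, d} \<le> card D" using card_mono[OF fin] c1D cD dD by simp
      moreover have "card {c1, c, d} = 3" using False dc dc1 by auto
      ultimately have n3: "3 \<le> n" using cardD by simp
      define D3 where "D3 = D - {c1} - {c} - {d}"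
      have cc_1: "corner (D - {c1}) c" using cc False unfolding corner_def by auto
      have cc_2: "corner (D - {c1} - {c}) d"
        using dD dc dc1 dnb unfolding corner_def nb_def by auto
      have dc3: "dc D3" unfolding D3_def by (rule dc_remove[OF dc_remove[OF dc_remove[OF dcD cc1] cc_1] cc_2])
      have card3: "card D3 = n - 3" unfolding D3_def
        using fin dD cD c1D False dc dc1 cardD by (simp add: card_Diff_singleton)
      have D3sub: "D3 \<subseteq> diagram rho" using Dsub D3_def by auto
      have e3: "diagram rho - D3 = insert d (insert c (insert c1 (diagram rho - D)))"
        unfolding D3_def using Dsub dD cD c1D by auto
      have en1: "n - 1 + 1 = n" using n3 by simp
      have en2: "n - 2 + 1 = n - 1" using n3 by simp
      have en3: "n - 3 + 1 = n - 2" using n3 by simp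
      define B3 where "B3 = B(c1 := n, c := n - 1, d := n - 2)"
      define B3' where "B3' = B(c := n, c1 := n - 1, d := n - 2)"
      have bij3: "bij_betw B3 (diagram rho - D3) {(n - 3)+1..psize rho}"
      proof -
        have b1: "bij_betw (B(c1:=n)) (insert c1 (diagram rho - D)) {n..psize rho}"
          by (rule bij_upd[OF bij]) (use c1D nN in auto)
        then have b1': "bij_betw (B(c1:=n)) (insert c1 (diagram rho - D)) {(n-1)+1..psize rho}"
          by (simp only: en1)
        have b2: "bij_betw (B(c1:=n, c:=n-1)) (insert c (insert c1 (diagram rho - D))) {n-1..psize rho}"
          by (rule bij_upd[OF b1']) (use cD False nN in auto)
        then have b2': "bij_betw (B(c1:=n, c:=n-1)) (insert c (insert c1 (diagram rho - D))) {(n-2)+1..psize rho}"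
          by (simp only: en2)
        have b3: "bij_betw B3 (insert d (insert c (insert c1 (diagram rho - D)))) {n-2..psize rho}"
          unfolding B3_def by (rule bij_upd[OF b2']) (use dD dc dc1 nN in auto)
        then show ?thesis unfolding e3 en3 .
      qed
      have bij3': "bij_betw B3' (diagram rho - D3) {(n - 3)+1..psize rho}"
      proof -
        have b1: "bij_betw (B(c:=n)) (insert c (diagram rho - D)) {n..psize rho}"
          by (rule bij_upd[OF bij]) (use cD nN in auto)
        then have b1': "bij_betw (B(c:=n)) (insert c (diagram rho - D)) {(n-1)+1..psize rho}"
          by (simp only: en1)
        have b2: "bij_betw (B(c:=n, c1:=n-1)) (insert c1 (insert c (diagram rho - D))) {n-1..psize rho}"
          by (rule bij_upd[OF b1']) (use c1D False nN in auto)
        then have b2': "bij_betw (B(c:=n, c1:=n-1)) (insert c1 (insert c (diagram rho - D))) {(n-2)+1..psize rho}"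
          by (simp only: en2)
        have b3: "bij_betw B3' (insert d (insert c1 (insert c (diagram rho - D)))) {n-2..psize rho}"
          unfolding B3'_def by (rule bij_upd[OF b2']) (use dD dc dc1 nN in auto)
        moreover have "insert d (insert c1 (insert c (diagram rho - D))) = diagram rho - D3"
          unfolding e3 by auto
        ultimately show ?thesis unfolding en3 by simp
      qed
      have D3P: "D3 = D - {c1, c, d}" unfolding D3_def by auto
      have std3: "std rho D3 B3" unfolding D3P
      proof (rule std_lemma[OF X bij dcD Dsub])
        show "{c1, c, d} \<subseteq> D" using c1D cD dD by simp
        show "\<And>x. x \<notin> {c1, c, d} \<Longrightarrow> B3 x = B x" unfolding B3_def by simp
        show "\<And>x. x \<in> {c1, c, d} \<Longrightarrow> B3 x \<le> n" unfolding B3_def using False dc dc1 by auto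
        show "\<And>u v. nb u v \<Longrightarrow> u \<in> {c1, c, d} \<Longrightarrow> v \<in> {c1, c, d} \<Longrightarrow> B3 u < B3 v"
        proof -
          fix u v assume h: "nb u v" "u \<in> {c1, c, d}" "v \<in> {c1, c, d}"
          have vD: "v \<in> D" using h(3) c1D cD dD by auto
          have "u \<noteq> c1" using corner_nb[OF cc1, of v] h(1) vD by auto
          moreover have "u \<noteq> c" using corner_nb[OF cc, of v] h(1) vD by auto
          ultimately have ud: "u = d" using h(2) by auto
          then have "v \<noteq> d" using nb_irrefl[of d] h(1) by auto
          then show "B3 u < B3 v" using ud h(3) n3 False dc dc1 unfolding B3_def by auto
        qed
      qed
      have std3': "std rho D3 B3'" unfolding D3P
      proof (rule std_lemma[OF X bij dcD Dsub])
        show "{c1, c, d} \<subseteq> D" using c1D cD dD by simp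
        show "\<And>x. x \<notin> {c1, c, d} \<Longrightarrow> B3' x = B x" unfolding B3'_def by simp
        show "\<And>x. x \<in> {c1, c, d} \<Longrightarrow> B3' x \<le> n" unfolding B3'_def using False dc dc1 by auto
        show "\<And>u v. nb u v \<Longrightarrow> u \<in> {c1, c, d} \<Longrightarrow> v \<in> {c1, c, d} \<Longrightarrow> B3' u < B3' v"
        proof -
          fix u v assume h: "nb u v" "u \<in> {c1, c, d}" "v \<in> {c1, c, d}"
          have vD: "v \<in> D" using h(3) c1D cD dD by auto
          have "u \<noteq> c1" using corner_nb[OF cc1, of v] h(1) vD by auto
          moreover have "u \<noteq> c" using corner_nb[OF cc, of v] h(1) vD by auto
          ultimately have ud: "u = d" using h(2) by auto
          then have "v \<noteq> d" using nb_irrefl[of d] h(1) by auto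
          then show "B3' u < B3' v" using ud h(3) n3 False dc dc1 unfolding B3'_def by auto
        qed
      qed
      have "ASY rho D3 B3 \<noteq> {}"
        by (rule EX[OF _ dc3 D3sub card3 _ bij3 std3]) (use fin nN D3_def in auto)
      then obtain S where S: "S \<in> ASY rho D3 B3" by auto
      have SS: "S \<in> SYT rho" using S by (rule ASY_SYT)
      have cdiag1: "c1 \<in> diagram rho" "c \<in> diagram rho" "d \<in> diagram rho" using Dsub c1D cD dD by auto
      have Sv: "S c1 = n" "S c = n - 1" "S d = n - 2"
        using S cdiag1 False dc dc1 unfolding ASY_def D3_def B3_def by auto
      have injS: "inj_on S (diagram rho)" using bij_betw_imp_inj_on[OF SYT_D(1)[OF SS]] .
      define S' where "S' = (\<lambda>x. swapv (n-1) (n-1+1) (S x))"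
      have S'SYT: "S' \<in> SYT rho" unfolding S'_def
      proof (rule swap_SYT[OF SS])
        show "1 \<le> n - 1" "n - 1 + 1 \<le> psize rho" using n3 nN by auto
        fix u v assume h: "nb u v" "u \<in> diagram rho" "v \<in> diagram rho"
        show "\<not> (S u = n - 1 \<and> S v = n - 1 + 1)"
        proof
          assume "S u = n - 1 \<and> S v = n - 1 + 1"
          then have "S u = S c" "S v = S c1" using Sv en1 by auto
          then have "u = c" "v = c1" using injS h cdiag1 unfolding inj_on_def by auto
          then show False using corner_nb[OF cc, of c1] h(1) c1D by simp
        qed
      qed
      have "partner (n-1) (reading_word S) = n - 1 + 1"
      proof (rule partner_compute[OF SS])
        show "2 \<le> n - 1" using n3 by simp
        show "d \<in> diagram rho" "c \<in> diagram rho" "c1 \<in> diagram rho" using cdiag1 by auto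
        show "S d = n - 1 - 1" "S c = n - 1" "S c1 = n - 1 + 1" using Sv n3 by auto
        show "rkey c < rkey d" using ct1 by (rule rkey_less)
        show "rkey d < rkey c1" using ct2 by (rule rkey_less)
      qed
      then have dS: "d_tab (n-1) S = S'" unfolding d_tab_def S'_def by simp
      have "S' c = n" unfolding S'_def using Sv n3 by (simp add: swapv_def)
      then have Sne: "d_tab (n-1) S \<noteq> S" using dS Sv n3 by (metis diff_less less_numeral_extra(1) order_less_irrefl le_trans numeral_le_one_iff semiring_norm(69) zero_less_iff_neq_zero not_numeral_le_zero)
      have "(S, d_tab (n-1) S) \<in> R rho n" unfolding R_def
        using SS n3 nN Sne by (intro CollectI exI[of _ S] exI[of _ "n-1"]) auto
      then have edge: "(S, S') \<in> Rs rho n" unfolding Rs_def dS by simp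
      have S1: "S \<in> ASY rho (D - {c1}) (B(c1:=n))"
      proof (rule ASY_sub[OF S])
        show "D3 \<subseteq> D - {c1}" unfolding D3_def by auto
        fix x assume x: "x \<in> diagram rho - (D - {c1})"
        then have "x \<noteq> c" "x \<noteq> d" using cD dD dc1 False by auto
        then show "B3 x = (B(c1 := n)) x" unfolding B3_def by simp
      qed
      have X1: "X \<in> ASY rho (D - {c1}) (B(c1:=n))" using ASY_upd[OF X, of c1 n] Xc1 by simp
      have XS1: "(X, S) \<in> (Rs rho n)\<^sup>*" by (rule IHr[OF cc1 X1 S1])
      have S'A: "S' \<in> ASY rho (D - {c}) (B(c:=n))"
        unfolding ASY_def
      proof (intro CollectI conjI ballI)
        show "S' \<in> SYT rho" by (rule S'SYT)
        fix x assume x: "x \<in> diagram rho - (D - {c})"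
        show "S' x = (B(c := n)) x"
        proof (cases "x = c")
          case True
          then show ?thesis using \<open>S' c = n\<close> by simp
        next
          case xc: False
          then have xd: "x \<in> diagram rho - D" using x by auto
          then have "x \<in> diagram rho - D3" unfolding D3_def by auto
          then have "S x = B3 x" using S unfolding ASY_def by blast
          moreover have "B3 x = B x" unfolding B3_def using xd c1D cD dD by auto
          moreover have "B x \<ge> n + 1" using bij_betwE[OF bij] xd by auto
          ultimately show ?thesis unfolding S'_def using xc n3 by (auto simp: swapv_def)
        qed
      qed
      have "(X, S') \<in> (Rs rho n)\<^sup>*" using XS1 edge by (rule rtrancl_into_rtrancl)
      then show ?thesis using S'A by blast
    qed
  qed
  obtain Y where Y: "Y \<in> ASY rho (D - {c}) (B(c:=n))" "(T,Y) \<in> (Rs rho n)\<^sup>*" using to_c[OF T] by blast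
  obtain Y' where Y': "Y' \<in> ASY rho (D - {c}) (B(c:=n))" "(T',Y') \<in> (Rs rho n)\<^sup>*" using to_c[OF T'] by blast
  have "(Y, Y') \<in> (Rs rho n)\<^sup>*" by (rule IHr[OF cc Y(1) Y'(1)])
  moreover have "(Y', T') \<in> (Rs rho n)\<^sup>*" using Rs_sym Y'(2) by blast
  ultimately have "(T,T') \<in> (Rs rho n)\<^sup>*" using Y(2) by (meson rtrancl_trans)
  then show ?case unfolding n_def .
qed



lemma card_diagram: "card (diagram la) = psize la"
proof -
  have e: "diagram la = prod.swap ` (SIGMA j:{1..length la}. {1..la!(j-1)})"
    unfolding diagram_def by (auto simp: image_iff)
  have "card (diagram la) = card (SIGMA j:{1..length la}. {1..la!(j-1)})"
    unfolding e by (rule card_image) (simp add: inj_on_def)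
  also have "\<dots> = (\<Sum>j\<in>{1..length la}. la!(j-1))" by (simp add: card_SigmaI)
  also have "\<dots> = (\<Sum>j\<in>{0..<length la}. la!j)"
    by (rule sum.reindex_bij_witness[of _ Suc "\<lambda>j. j - 1"]) auto
  also have "\<dots> = sum_list la" by (simp add: sum_list_sum_nth)
  finally show ?thesis unfolding psize_def .
qed

theorem lemma3p6:
  fixes n N :: nat
    and V :: "'v set" and sig :: "'v \<Rightarrow> nat \<Rightarrow> int" and E :: "nat \<Rightarrow> 'v set set"
    and la rho :: "nat list" and A :: "nat \<times> nat \<Rightarrow> nat"
    and phi :: "'v \<Rightarrow> (nat \<times> nat \<Rightarrow> nat)"
  assumes "signed_colored_graph n N V sig E"
    and "ax1 n V sig E"
    and "is_partition la" and "is_partition rho" and "diagram la \<subseteq> diagram rho"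
    and "psize la = n" and "psize rho = N"
    and "bij_betw A (skew rho la) {n + 1..N}"
    and "ASYT rho la A \<noteq> {}"
    and "morphism n N V sig E (ASYT rho la A) desc_sig (aug_edges rho la A) phi"
    and "V \<noteq> {}"
  shows "phi ` V = ASYT rho la A"
proof -
  note scg = assms(1) and ax = assms(2) and part = assms(3) and sub = assms(5)
    and pla = assms(6) and prho = assms(7) and bijA = assms(8) and morph = assms(10) and Vne = assms(11)
  have ASYT_eq: "ASYT rho la A = ASY rho (diagram la) A" unfolding ASYT_def ASY_def skew_def by simp
  have img_sub: "phi ` V \<subseteq> ASYT rho la A" using morph unfolding morphism_def by auto
  have fwd: "\<And>X Y. X \<in> phi ` V \<Longrightarrow> (X,Y) \<in> R rho n \<Longrightarrow> Y \<in> phi ` V"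
  proof -
    fix X Y assume Xi: "X \<in> phi ` V" and XY: "(X,Y) \<in> R rho n"
    obtain v where v: "v \<in> V" "X = phi v" using Xi by auto
    obtain i where i: "Y = d_tab i X" "X \<in> SYT rho" "1 < i" "i < n" "i + 1 \<le> psize rho" "d_tab i X \<noteq> X"
      using XY unfolding R_def by auto
    have XA: "X \<in> ASYT rho la A" using img_sub Xi by auto
    have ds: "desc_sig X (i - 1) = - desc_sig X i" using d_tab_desc[OF i(2) _ i(5) i(6)] i(3) by simp
    have sg0: "\<forall>v\<in>V. \<forall>i. 1 \<le> i \<and> i < N \<longrightarrow> desc_sig (phi v) i = sig v i"
      using morph unfolding morphism_def by (elim conjE)
    have sg: "\<And>j. 1 \<le> j \<Longrightarrow> j < N \<Longrightarrow> desc_sig (phi v) j = sig v j"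
      using sg0 v(1) by simp
    have "sig v (i - 1) = - sig v i" using ds sg[of "i-1"] sg[of i] i prho v(2) by simp
    moreover have "(sig v (i - 1) = - sig v i) \<longleftrightarrow> (\<exists>x. {v, x} \<in> E i)"
    proof -
      have "\<forall>w\<in>V. \<forall>i. 1 < i \<and> i < n \<longrightarrow> ((sig w (i - 1) = - sig w i) \<longleftrightarrow> (\<exists>x. {w, x} \<in> E i))
        \<and> (\<forall>x y. {w, x} \<in> E i \<and> {w, y} \<in> E i \<longrightarrow> x = y)" using ax unfolding ax1_def .
      then show ?thesis using v(1) i(3,4) by simp
    qed
    ultimately obtain x where x: "{v, x} \<in> E i" by blast
    have "\<forall>i. 1 < i \<and> i < n \<longrightarrow> (\<forall>e\<in>E i. e \<subseteq> V \<and> card e = 2)"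
      using scg unfolding signed_colored_graph_def by (elim conjE)
    then have "\<forall>e\<in>E i. e \<subseteq> V \<and> card e = 2" using i(3,4) by simp
    then have "{v, x} \<subseteq> V" using x by blast
    then have xV: "x \<in> V" by simp
    have "\<forall>i. 1 < i \<and> i < n \<longrightarrow> (\<forall>u v. {u, v} \<in> E i \<longrightarrow> {phi u, phi v} \<in> aug_edges rho la A i)"
      using morph unfolding morphism_def by (elim conjE)
    then have "{phi v, phi x} \<in> aug_edges rho la A i" using x i(3,4) by simp
    then obtain S where S: "{phi v, phi x} = {S, d_tab i S}" "S \<in> ASYT rho la A" "d_tab i S \<noteq> S"
      unfolding aug_edges_def by auto
    have SS: "S \<in> SYT rho" using S(2) unfolding ASYT_def by simp
    have inv: "d_tab i (d_tab i S) = S" using d_tab_inv[OF SS _ i(5)] i(3) by simp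
    have "(X = S \<and> phi x = d_tab i S) \<or> (X = d_tab i S \<and> phi x = S)"
      using S(1) v(2) by (simp add: doubleton_eq_iff)
    then have "phi x = d_tab i X" using inv by auto
    then show "Y \<in> phi ` V" using i(1) xV by (metis image_eqI)
  qed
  have bwd: "\<And>X Y. Y \<in> phi ` V \<Longrightarrow> (X,Y) \<in> R rho n \<Longrightarrow> X \<in> phi ` V"
  proof -
    fix X Y assume Yi: "Y \<in> phi ` V" and XY: "(X,Y) \<in> R rho n"
    obtain i where i: "Y = d_tab i X" "X \<in> SYT rho" "1 < i" "i < n" "i + 1 \<le> psize rho" "d_tab i X \<noteq> X"
      using XY unfolding R_def by auto
    have YS: "Y \<in> SYT rho" using img_sub Yi unfolding ASYT_def by auto
    have inv: "d_tab i Y = X" using d_tab_inv[OF i(2) _ i(5)] i(1,3) by simp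
    have "(Y, d_tab i Y) \<in> R rho n" unfolding R_def
      using YS i inv by (intro CollectI exI[of _ Y] exI[of _ i]) auto
    then show "X \<in> phi ` V" using fwd[OF Yi] inv by simp
  qed
  have clos: "\<And>X Y. (X,Y) \<in> (Rs rho n)\<^sup>* \<Longrightarrow> X \<in> phi ` V \<Longrightarrow> Y \<in> phi ` V"
  proof -
    fix X Y assume "(X,Y) \<in> (Rs rho n)\<^sup>*" "X \<in> phi ` V"
    then show "Y \<in> phi ` V"
    proof (induction rule: rtrancl_induct)
      case base then show ?case .
    next
      case (step Y Z)
      have "(Y,Z) \<in> R rho n \<or> (Z,Y) \<in> R rho n" using step(2) unfolding Rs_def by auto
      moreover have YV: "Y \<in> phi ` V" using step.IH step.prems by blast
      ultimately show ?case using fwd[OF YV] bwd[OF YV] by blast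
    qed
  qed
  obtain v0 where v0: "v0 \<in> V" using Vne by auto
  have T0: "phi v0 \<in> ASY rho (diagram la) A" using img_sub v0 ASYT_eq by auto
  have "ASYT rho la A \<subseteq> phi ` V"
  proof
    fix T assume T: "T \<in> ASYT rho la A"
    have "(phi v0, T) \<in> (Rs rho n)\<^sup>*"
    proof (rule Conn[OF finite_diagram dc_diagram[OF part] sub])
      show "card (diagram la) = n" using card_diagram pla by simp
      show "bij_betw A (diagram rho - diagram la) {n + 1..psize rho}"
        using bijA prho unfolding skew_def by simp
      show "phi v0 \<in> ASY rho (diagram la) A" by (rule T0)
      show "T \<in> ASY rho (diagram la) A" using T ASYT_eq by simp
    qed
    then show "T \<in> phi ` V" using clos v0 by blast
  qed
  with img_sub show ?thesis by blast
qed

end
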